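(* Let $N_1,N_2,N_w,N_b,N$ and $T$ be as in the context. For a vector $c=(c_0,\dots,c_{N_w})\in\mathbb{R}^{N_w+1}$ define $b=(b_0,\dots,b_{N_w})$ by the polynomial identity $$\sum_{i=0}^{N_w}c_i\,x^iy^{N_1-i}z^{N_w-i}=\sum_{i=0}^{N_w}b_i\,(x-yz)^i\,y^{N_1-i}z^{N_w-i},$$ equivalently $b_j=\sum_{i=j}^{N_w}\binom{i}{j}c_i$ (an invertible linear map, with inverse $c_i=\sum_{j=i}^{N_w}(-1)^{j-i}\binom{j}{i}b_j$). Then $Tc=\lambda c$ holds if and only if, for all $i=0,\dots,N_w$ (with $b_{-1}:=0$), $$N_1N_2(\lambda-1)\,b_i=(N_1-i+1)(N_w-i+1)\,b_{i-1}-i\,(N_w-i+N_b+1)\,b_i .$$ In particular, $T$ is similar to a lower triangular matrix with diagonal entries $1-\frac{i(N_w+N_b+1-i)}{N_1N_2}$, $i=0,\dots,N_w$.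
   Context: Integers $N_1,N_2\ge1$, $N_w,N_b\ge0$ with $N_w+N_b=N_1+N_2=:N$, $N_w\le N_1$, $N_w\le N_2$. States $i\in\{0,\dots,N_w\}$ (number of white balls in urn 1). $p_i=\frac{(N_1-i)(N_w-i)}{N_1N_2}$, $q_i=\frac{i(N_b-N_1+i)}{N_1N_2}$, $r_i=1-p_i-q_i$. $T$ is the $(N_w+1)\times(N_w+1)$ matrix with $T_{i+1,i}=p_i$, $T_{i-1,i}=q_i$, $T_{ii}=r_i$, other entries $0$ ($T_{ij}$ is the probability of moving from state $j$ to state $i$; columns sum to 1). *)

theory Defs
  imports "Jordan_Normal_Form.Matrix"
begin

definition p_coef :: "nat \<Rightarrow> nat \<Rightarrow> nat \<Rightarrow> nat \<Rightarrow> nat \<Rightarrow> real" where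
  "p_coef N1 N2 Nw Nb i = (real N1 - real i) * (real Nw - real i) / (real N1 * real N2)"

definition q_coef :: "nat \<Rightarrow> nat \<Rightarrow> nat \<Rightarrow> nat \<Rightarrow> nat \<Rightarrow> real" where
  "q_coef N1 N2 Nw Nb i = real i * (real Nb - real N1 + real i) / (real N1 * real N2)"

definition r_coef :: "nat \<Rightarrow> nat \<Rightarrow> nat \<Rightarrow> nat \<Rightarrow> nat \<Rightarrow> real" where
  "r_coef N1 N2 Nw Nb i = 1 - p_coef N1 N2 Nw Nb i - q_coef N1 N2 Nw Nb i"

text \<open>The (Nw+1) x (Nw+1) transition matrix, indices 0..Nw; entry (i,j) is the
  probability of moving from state j to state i.\<close>
definition T_mat :: "nat \<Rightarrow> nat \<Rightarrow> nat \<Rightarrow> nat \<Rightarrow> real mat" where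
  "T_mat N1 N2 Nw Nb = mat (Nw+1) (Nw+1) (\<lambda>(i,j).
      if i = j + 1 then p_coef N1 N2 Nw Nb j
      else if j = i + 1 then q_coef N1 N2 Nw Nb j
      else if i = j then r_coef N1 N2 Nw Nb j
      else 0)"

definition b_vec :: "nat \<Rightarrow> real vec \<Rightarrow> real vec" where
  "b_vec Nw c = vec (Nw+1) (\<lambda>j. \<Sum>i=j..Nw. real (i choose j) * c $ i)"

definition lower_triangular :: "'a::zero mat \<Rightarrow> bool" where
  "lower_triangular A \<longleftrightarrow> (\<forall>i < dim_row A. \<forall>j < dim_col A. i < j \<longrightarrow> A $$ (i,j) = 0)"

end

theory Submission imports Defs "Jordan_Normal_Form.Determinant" begin

lemma alg:
  fixes N1 N2 Nw Nb i j :: nat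
  assumes "N1 \<ge> 1" "N2 \<ge> 1"
  shows "real (j choose i) * r_coef N1 N2 Nw Nb j + real (Suc j choose i) * p_coef N1 N2 Nw Nb j
         + real ((j-1) choose i) * q_coef N1 N2 Nw Nb j
       = (1 - real i * (real Nw + real Nb + 1 - real i) / (real N1 * real N2)) * real (j choose i)
         + (if i > 0 then (real N1 - real i + 1) * (real Nw - real i + 1) / (real N1 * real N2) * real (j choose (i-1)) else 0)"
proof -
  have NN: "real N1 * real N2 > 0" using assms by simp
  show ?thesis
  proof (cases i)
    case 0
    then show ?thesis using NN by (cases j) (auto simp: r_coef_def p_coef_def q_coef_def field_simps)
  next
    case (Suc u)
    define a where "a = real (j choose i)"
    define c where "c = real (j choose u)"
    have rel1: "(real j - real i + 1) * c = real i * a"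
    proof (cases "u \<le> j")
      case True
      have "Suc u * (j choose Suc u) = (j - u) * (j choose u)"
        using binomial_absorption[of u j] binomial_absorb_comp[of j u] by simp
      then have "real (Suc u * (j choose Suc u)) = real ((j - u) * (j choose u))" by simp
      then show ?thesis using True Suc unfolding a_def c_def by (simp add: of_nat_diff algebra_simps)
    next
      case False
      then show ?thesis using Suc unfolding a_def c_def by (simp add: binomial_eq_0)
    qed
    have P: "real (Suc j choose i) = a + c" unfolding a_def c_def Suc by simp
    have main: "real ((j-1) choose i) * (real j * (real Nb - real N1 + real j))
         = a * real j * (real Nb - real N1 + real j) - c * (real j - real i + 1) * (real Nb - real N1 + real j)"
    proof (cases j)
      case 0 then show ?thesis using rel1 Suc by (auto simp: a_def)
    next
      case (Suc v)
      have e1: "real (Suc v choose Suc u) = real (v choose u) + real (v choose Suc u)"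
        by simp
      have e2: "real (Suc u) * real (Suc v choose Suc u) = real (Suc v) * real (v choose u)"
        using Suc_times_binomial[of u v] by (metis of_nat_mult)
      have "real (v choose Suc u) * real j = a * real j - real (v choose u) * real j"
        using e1 Suc \<open>i = Suc u\<close> unfolding a_def by (simp add: algebra_simps)
      also have "\<dots> = a * real j - real i * a"
        using e2 Suc \<open>i = Suc u\<close> unfolding a_def by (simp add: algebra_simps)
      also have "\<dots> = a * real j - c * (real j - real i + 1)" using rel1 by (simp add: algebra_simps)
      finally have F: "real (v choose Suc u) * real j = a * real j - c * (real j - real i + 1)" .
      have "real ((j-1) choose i) * (real j * (real Nb - real N1 + real j))
          = (real (v choose Suc u) * real j) * (real Nb - real N1 + real j)"
        using Suc \<open>i = Suc u\<close> by simp
      also have "\<dots> = (a * real j - c * (real j - real i + 1)) * (real Nb - real N1 + real j)"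
        by (simp only: F)
      finally show ?thesis by (simp only: left_diff_distrib mult.assoc)
    qed
    have goal: "a * (real N1 * real N2 - (real N1 - real j) * (real Nw - real j) - real j * (real Nb - real N1 + real j))
       + (a + c) * ((real N1 - real j) * (real Nw - real j))
       + (a * real j * (real Nb - real N1 + real j) - c * (real j - real i + 1) * (real Nb - real N1 + real j))
       = (real N1 * real N2 - real i * (real Nw + real Nb + 1 - real i)) * a
         + (real N1 - real i + 1) * (real Nw - real i + 1) * c"
    proof -
      have "real i * (real Nw + real Nb + 1 - real i) * a = (real j - real i + 1) * c * (real Nw + real Nb + 1 - real i)"
        using rel1 by simp
      then show ?thesis by (simp add: algebra_simps)
    qed
    define D where "D = real N1 * real N2"
    define Cp where "Cp = real ((j-1) choose i)"
    have D0: "D \<noteq> 0" using NN unfolding D_def by linarith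
    have L: "real (j choose i) * r_coef N1 N2 Nw Nb j + real (Suc j choose i) * p_coef N1 N2 Nw Nb j
         + real ((j-1) choose i) * q_coef N1 N2 Nw Nb j
      = (a * (D - (real N1 - real j) * (real Nw - real j) - real j * (real Nb - real N1 + real j))
       + (a + c) * ((real N1 - real j) * (real Nw - real j))
       + Cp * (real j * (real Nb - real N1 + real j))) / D"
      unfolding r_coef_def p_coef_def q_coef_def P a_def[symmetric] Cp_def[symmetric] D_def[symmetric]
      using D0 by (simp add: field_simps)
    have R: "(1 - real i * (real Nw + real Nb + 1 - real i) / (real N1 * real N2)) * real (j choose i)
         + (if i > 0 then (real N1 - real i + 1) * (real Nw - real i + 1) / (real N1 * real N2) * real (j choose (i-1)) else 0)
       = ((D - real i * (real Nw + real Nb + 1 - real i)) * a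
         + (real N1 - real i + 1) * (real Nw - real i + 1) * c) / D"
      unfolding a_def[symmetric] D_def[symmetric] using D0 Suc c_def by (simp add: field_simps)
    show ?thesis unfolding L R using goal main unfolding D_def[symmetric] Cp_def[symmetric] by simp
  qed
qed

definition Bm :: "nat \<Rightarrow> real mat" where
  "Bm Nw = mat (Nw+1) (Nw+1) (\<lambda>(i,j). real (j choose i))"

definition Mm :: "nat \<Rightarrow> nat \<Rightarrow> nat \<Rightarrow> nat \<Rightarrow> real mat" where
  "Mm N1 N2 Nw Nb = mat (Nw+1) (Nw+1) (\<lambda>(i,k).
     if k = i then 1 - real i * (real Nw + real Nb + 1 - real i) / (real N1 * real N2)
     else if Suc k = i then (real N1 - real i + 1) * (real Nw - real i + 1) / (real N1 * real N2)
     else 0)"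

lemma T_side:
  assumes "i < Suc Nw" "j < Suc Nw"
  shows "(\<Sum>k = 0..<Suc Nw. real (k choose i) * T_mat N1 N2 Nw Nb $$ (k,j))
     = real (j choose i) * r_coef N1 N2 Nw Nb j + real (Suc j choose i) * p_coef N1 N2 Nw Nb j
         + real ((j-1) choose i) * q_coef N1 N2 Nw Nb j"
proof -
  have pt: "real (k choose i) * T_mat N1 N2 Nw Nb $$ (k,j) =
     (if k = j then real (j choose i) * r_coef N1 N2 Nw Nb j else 0)
     + (if k = Suc j then real (Suc j choose i) * p_coef N1 N2 Nw Nb j else 0)
     + (if 0 < j then (if k = j - 1 then real ((j-1) choose i) * q_coef N1 N2 Nw Nb j else 0) else 0)"
    if "k \<in> {0..<Suc Nw}" for k
  proof -
    have T: "T_mat N1 N2 Nw Nb $$ (k,j) = (if k = j + 1 then p_coef N1 N2 Nw Nb j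
      else if j = k + 1 then q_coef N1 N2 Nw Nb j
      else if k = j then r_coef N1 N2 Nw Nb j else 0)"
      using that assms unfolding T_mat_def by simp
    consider "k = j" | "k = Suc j" | "j = Suc k" | "k \<noteq> j \<and> k \<noteq> Suc j \<and> j \<noteq> Suc k" by blast
    then show ?thesis unfolding T by cases auto
  qed
  have pNw: "p_coef N1 N2 Nw Nb Nw = 0" by (simp add: p_coef_def)
  have q0: "q_coef N1 N2 Nw Nb 0 = 0" by (simp add: q_coef_def)
  have "(\<Sum>k = 0..<Suc Nw. real (k choose i) * T_mat N1 N2 Nw Nb $$ (k,j))
     = (\<Sum>k = 0..<Suc Nw. (if k = j then real (j choose i) * r_coef N1 N2 Nw Nb j else 0)
     + (if k = Suc j then real (Suc j choose i) * p_coef N1 N2 Nw Nb j else 0)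
     + (if 0 < j then (if k = j - 1 then real ((j-1) choose i) * q_coef N1 N2 Nw Nb j else 0) else 0))"
    by (rule sum.cong[OF refl pt])
  also have "\<dots> = real (j choose i) * r_coef N1 N2 Nw Nb j + real (Suc j choose i) * p_coef N1 N2 Nw Nb j
         + real ((j-1) choose i) * q_coef N1 N2 Nw Nb j"
    using assms pNw q0 by (auto simp: sum.distrib sum.delta' less_Suc_eq)
  finally show ?thesis .
qed

lemma M_side:
  assumes "i < Suc Nw" "j < Suc Nw"
  shows "(\<Sum>k = 0..<Suc Nw. Mm N1 N2 Nw Nb $$ (i,k) * real (j choose k))
     = (1 - real i * (real Nw + real Nb + 1 - real i) / (real N1 * real N2)) * real (j choose i)
         + (if i > 0 then (real N1 - real i + 1) * (real Nw - real i + 1) / (real N1 * real N2) * real (j choose (i-1)) else 0)"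
proof -
  have pt: "Mm N1 N2 Nw Nb $$ (i,k) * real (j choose k) =
     (if k = i then (1 - real i * (real Nw + real Nb + 1 - real i) / (real N1 * real N2)) * real (j choose i) else 0)
     + (if 0 < i then (if k = i - 1 then (real N1 - real i + 1) * (real Nw - real i + 1) / (real N1 * real N2) * real (j choose (i-1)) else 0) else 0)"
    if "k \<in> {0..<Suc Nw}" for k
  proof -
    have T: "Mm N1 N2 Nw Nb $$ (i,k) = (if k = i then 1 - real i * (real Nw + real Nb + 1 - real i) / (real N1 * real N2)
     else if Suc k = i then (real N1 - real i + 1) * (real Nw - real i + 1) / (real N1 * real N2)
     else 0)"
      using that assms unfolding Mm_def by simp
    consider "k = i" | "i = Suc k" | "k \<noteq> i \<and> i \<noteq> Suc k" by blast
    then show ?thesis unfolding T by cases auto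
  qed
  have "(\<Sum>k = 0..<Suc Nw. Mm N1 N2 Nw Nb $$ (i,k) * real (j choose k))
     = (\<Sum>k = 0..<Suc Nw. (if k = i then (1 - real i * (real Nw + real Nb + 1 - real i) / (real N1 * real N2)) * real (j choose i) else 0)
     + (if 0 < i then (if k = i - 1 then (real N1 - real i + 1) * (real Nw - real i + 1) / (real N1 * real N2) * real (j choose (i-1)) else 0) else 0))"
    by (rule sum.cong[OF refl pt])
  also have "\<dots> = (1 - real i * (real Nw + real Nb + 1 - real i) / (real N1 * real N2)) * real (j choose i)
         + (if i > 0 then (real N1 - real i + 1) * (real Nw - real i + 1) / (real N1 * real N2) * real (j choose (i-1)) else 0)" using assms by (auto simp: sum.distrib sum.delta')
  finally show ?thesis .
qed

lemma M_gen:
  assumes "i < Suc Nw"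
  shows "(\<Sum>k = 0..<Suc Nw. Mm N1 N2 Nw Nb $$ (i,k) * f k)
     = (1 - real i * (real Nw + real Nb + 1 - real i) / (real N1 * real N2)) * f i
         + (if i > 0 then (real N1 - real i + 1) * (real Nw - real i + 1) / (real N1 * real N2) * f (i-1) else 0)"
proof -
  have pt: "Mm N1 N2 Nw Nb $$ (i,k) * f k =
     (if k = i then (1 - real i * (real Nw + real Nb + 1 - real i) / (real N1 * real N2)) * f i else 0)
     + (if 0 < i then (if k = i - 1 then (real N1 - real i + 1) * (real Nw - real i + 1) / (real N1 * real N2) * f (i-1) else 0) else 0)"
    if "k \<in> {0..<Suc Nw}" for k
  proof -
    have T: "Mm N1 N2 Nw Nb $$ (i,k) = (if k = i then 1 - real i * (real Nw + real Nb + 1 - real i) / (real N1 * real N2)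
     else if Suc k = i then (real N1 - real i + 1) * (real Nw - real i + 1) / (real N1 * real N2)
     else 0)"
      using that assms unfolding Mm_def by simp
    consider "k = i" | "i = Suc k" | "k \<noteq> i \<and> i \<noteq> Suc k" by blast
    then show ?thesis unfolding T by cases auto
  qed
  have "(\<Sum>k = 0..<Suc Nw. Mm N1 N2 Nw Nb $$ (i,k) * f k)
     = (\<Sum>k = 0..<Suc Nw. (if k = i then (1 - real i * (real Nw + real Nb + 1 - real i) / (real N1 * real N2)) * f i else 0)
     + (if 0 < i then (if k = i - 1 then (real N1 - real i + 1) * (real Nw - real i + 1) / (real N1 * real N2) * f (i-1) else 0) else 0))"
    by (rule sum.cong[OF refl pt])
  also have "\<dots> = (1 - real i * (real Nw + real Nb + 1 - real i) / (real N1 * real N2)) * f i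
         + (if i > 0 then (real N1 - real i + 1) * (real Nw - real i + 1) / (real N1 * real N2) * f (i-1) else 0)" using assms by (auto simp: sum.distrib sum.delta')
  finally show ?thesis .
qed

lemma BT_MB:
  assumes "N1 \<ge> 1" "N2 \<ge> 1"
  shows "Bm Nw * T_mat N1 N2 Nw Nb = Mm N1 N2 Nw Nb * Bm Nw"
proof (rule eq_matI)
  fix i j assume ij: "i < dim_row (Mm N1 N2 Nw Nb * Bm Nw)" "j < dim_col (Mm N1 N2 Nw Nb * Bm Nw)"
  then have i: "i < Suc Nw" and j: "j < Suc Nw" by (auto simp: Mm_def Bm_def)
  have "(Bm Nw * T_mat N1 N2 Nw Nb) $$ (i,j) = (\<Sum>k = 0..<Suc Nw. real (k choose i) * T_mat N1 N2 Nw Nb $$ (k,j))"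
    using i j by (auto simp: Bm_def T_mat_def scalar_prod_def intro!: sum.cong)
  also have "\<dots> = (\<Sum>k = 0..<Suc Nw. Mm N1 N2 Nw Nb $$ (i,k) * real (j choose k))"
    unfolding T_side[OF i j] M_side[OF i j] by (rule alg[OF assms])
  also have "\<dots> = (Mm N1 N2 Nw Nb * Bm Nw) $$ (i,j)"
    using i j by (auto simp: Bm_def Mm_def scalar_prod_def intro!: sum.cong)
  finally show "(Bm Nw * T_mat N1 N2 Nw Nb) $$ (i,j) = (Mm N1 N2 Nw Nb * Bm Nw) $$ (i,j)" .
qed (auto simp: Bm_def Mm_def T_mat_def)

lemma fe:
  fixes D x y bi bp lam :: real
  assumes "D \<noteq> 0"
  shows "((1 - x / D) * bi + y / D * bp = lam * bi) \<longleftrightarrow> (D * (lam - 1) * bi = y * bp - x * bi)"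
proof -
  have "((1 - x / D) * bi + y / D * bp = lam * bi) \<longleftrightarrow> D * ((1 - x / D) * bi + y / D * bp) = D * (lam * bi)"
    using assms by simp
  also have "D * ((1 - x / D) * bi + y / D * bp) = D * bi - x * bi + y * bp"
    using assms by (simp add: field_simps)
  finally show ?thesis by (auto simp: algebra_simps)
qed

theorem mainTheorem2:
  fixes N1 N2 Nw Nb :: nat
  assumes "N1 \<ge> 1" and "N2 \<ge> 1" and "Nw + Nb = N1 + N2"
    and "Nw \<le> N1" and "Nw \<le> N2"
  shows "(\<forall>(c :: real vec) (lam :: real). c \<in> carrier_vec (Nw+1) \<longrightarrow>
           (T_mat N1 N2 Nw Nb *\<^sub>v c = lam \<cdot>\<^sub>v c \<longleftrightarrow>
            (\<forall>i \<le> Nw.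
               real N1 * real N2 * (lam - 1) * (b_vec Nw c $ i)
               = (real N1 - real i + 1) * (real Nw - real i + 1)
                   * (if i = 0 then 0 else b_vec Nw c $ (i - 1))
                 - real i * (real Nw - real i + real Nb + 1) * (b_vec Nw c $ i))))
       \<and> (\<exists>L :: real mat. L \<in> carrier_mat (Nw+1) (Nw+1) \<and>
            similar_mat (T_mat N1 N2 Nw Nb) L \<and> lower_triangular L \<and>
            (\<forall>i \<le> Nw. L $$ (i,i) = 1 - real i * (real Nw + real Nb + 1 - real i) / (real N1 * real N2)))"
proof -
  define n where "n = Nw + 1"
  define B where "B = Bm Nw"
  define M where "M = Mm N1 N2 Nw Nb"
  define T where "T = T_mat N1 N2 Nw Nb"
  have Bc: "B \<in> carrier_mat n n" unfolding B_def Bm_def n_def by simp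
  have Mc: "M \<in> carrier_mat n n" unfolding M_def Mm_def n_def by simp
  have Tc: "T \<in> carrier_mat n n" unfolding T_def T_mat_def n_def by simp
  have BT: "B * T = M * B" unfolding B_def T_def M_def by (rule BT_MB[OF assms(1,2)])
  have ut: "upper_triangular B" unfolding upper_triangular_def B_def Bm_def
    by (auto simp: binomial_eq_0)
  have "det B = prod_list (diag_mat B)" by (rule det_upper_triangular[OF ut Bc])
  moreover have "diag_mat B = map (\<lambda>_. 1) [0..<n]"
    unfolding diag_mat_def B_def Bm_def n_def by (auto intro!: map_cong)
  moreover have "prod_list (map (\<lambda>_. 1::real) xs) = 1" for xs :: "nat list" by (induct xs) auto
  ultimately have "det B = 1" by simp
  then have "det B \<noteq> 0" by simp
  from det_non_zero_imp_unit[OF Bc this, unfolded Units_def, of "()"]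
  obtain Bi where Bic: "Bi \<in> carrier_mat n n" and BiB: "Bi * B = 1\<^sub>m n" and BBi: "B * Bi = 1\<^sub>m n"
    by (auto simp: ring_mat_def)
  have NN: "real N1 * real N2 > 0" using assms by simp
  have part1: "T *\<^sub>v c = lam \<cdot>\<^sub>v c \<longleftrightarrow>
            (\<forall>i \<le> Nw.
               real N1 * real N2 * (lam - 1) * (b_vec Nw c $ i)
               = (real N1 - real i + 1) * (real Nw - real i + 1)
                   * (if i = 0 then 0 else b_vec Nw c $ (i - 1))
                 - real i * (real Nw - real i + real Nb + 1) * (b_vec Nw c $ i))"
    if c: "c \<in> carrier_vec n" for c lam
  proof -
    define b where "b = B *\<^sub>v c"
    have bc: "b \<in> carrier_vec n" unfolding b_def using Bc c by simp
    have bv: "b_vec Nw c = b"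
    proof (rule eq_vecI)
      show "dim_vec (b_vec Nw c) = dim_vec b" using bc by (simp add: b_vec_def n_def)
      fix i assume "i < dim_vec b"
      then have i: "i < Suc Nw" using bc n_def by simp
      have "b $ i = (\<Sum>k = 0..<Suc Nw. real (k choose i) * c $ k)"
        unfolding b_def B_def Bm_def using i c n_def by (auto simp: scalar_prod_def intro!: sum.cong)
      also have "\<dots> = (\<Sum>k = i..Nw. real (k choose i) * c $ k)"
        by (rule sum.mono_neutral_right) (auto simp: binomial_eq_0)
      finally show "b_vec Nw c $ i = b $ i" using i by (simp add: b_vec_def)
    qed
    have step1: "T *\<^sub>v c = lam \<cdot>\<^sub>v c \<longleftrightarrow> B *\<^sub>v (T *\<^sub>v c) = B *\<^sub>v (lam \<cdot>\<^sub>v c)"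
    proof
      assume h: "B *\<^sub>v (T *\<^sub>v c) = B *\<^sub>v (lam \<cdot>\<^sub>v c)"
      have "Bi *\<^sub>v (B *\<^sub>v (T *\<^sub>v c)) = Bi *\<^sub>v (B *\<^sub>v (lam \<cdot>\<^sub>v c))" using h by simp
      then have "(Bi * B) *\<^sub>v (T *\<^sub>v c) = (Bi * B) *\<^sub>v (lam \<cdot>\<^sub>v c)"
        using Bic Bc Tc c by simp
      then show "T *\<^sub>v c = lam \<cdot>\<^sub>v c" unfolding BiB using Tc c by simp
    qed simp
    also have "\<dots> \<longleftrightarrow> M *\<^sub>v b = lam \<cdot>\<^sub>v b"
    proof -
      have "B *\<^sub>v (T *\<^sub>v c) = M *\<^sub>v b"
        using Bc Tc Mc c BT unfolding b_def
        by (metis assoc_mult_mat_vec)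
      moreover have "B *\<^sub>v (lam \<cdot>\<^sub>v c) = lam \<cdot>\<^sub>v b" unfolding b_def by (rule mult_mat_vec[OF Bc c])
      ultimately show ?thesis by simp
    qed
    also have "\<dots> \<longleftrightarrow> (\<forall>i < n. (M *\<^sub>v b) $ i = lam * b $ i)"
      using Mc bc by (auto simp: vec_eq_iff)
    also have "\<dots> \<longleftrightarrow> (\<forall>i \<le> Nw.
               real N1 * real N2 * (lam - 1) * (b $ i)
               = (real N1 - real i + 1) * (real Nw - real i + 1)
                   * (if i = 0 then 0 else b $ (i - 1))
                 - real i * (real Nw - real i + real Nb + 1) * (b $ i))"
    proof -
      have e: "(M *\<^sub>v b) $ i = lam * b $ i \<longleftrightarrow>
               real N1 * real N2 * (lam - 1) * (b $ i)
               = (real N1 - real i + 1) * (real Nw - real i + 1)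
                   * (if i = 0 then 0 else b $ (i - 1))
                 - real i * (real Nw - real i + real Nb + 1) * (b $ i)" if i: "i < Suc Nw" for i
      proof -
        have "(M *\<^sub>v b) $ i = (\<Sum>k = 0..<Suc Nw. M $$ (i,k) * b $ k)"
          using i Mc bc n_def by (auto simp: scalar_prod_def intro!: sum.cong)
        also have "\<dots> = (1 - real i * (real Nw + real Nb + 1 - real i) / (real N1 * real N2)) * b $ i
         + (if i > 0 then (real N1 - real i + 1) * (real Nw - real i + 1) / (real N1 * real N2) * b $ (i-1) else 0)"
          unfolding M_def by (rule M_gen[OF i])
        finally have Mb: "(M *\<^sub>v b) $ i = (1 - real i * (real Nw + real Nb + 1 - real i) / (real N1 * real N2)) * b $ i
         + (if i > 0 then (real N1 - real i + 1) * (real Nw - real i + 1) / (real N1 * real N2) * b $ (i-1) else 0)" .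
        have K: "real Nw + real Nb + 1 - real i = real Nw - real i + real Nb + 1" by simp
        have D0: "real N1 * real N2 \<noteq> 0" using NN by linarith
        show ?thesis
        proof (cases "i = 0")
          case True
          then show ?thesis using fe[OF D0, of 0 "b $ i" 0 "b $ 0" lam] Mb by simp
        next
          case False
          then show ?thesis using fe[OF D0, of "real i * (real Nw + real Nb + 1 - real i)" "b $ i"
             "(real N1 - real i + 1) * (real Nw - real i + 1)" "b $ (i-1)" lam] Mb K by (simp add: mult.assoc)
        qed
      qed
      show ?thesis using e unfolding n_def by auto
    qed
    finally show ?thesis unfolding bv .
  qed
  have part2: "similar_mat T M"
  proof -
    have "Bi * M * B = Bi * (M * B)" using Bic Mc Bc by simp
    also have "\<dots> = Bi * (B * T)" using BT by simp
    also have "\<dots> = (Bi * B) * T" using Bic Bc Tc by simp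
    also have "\<dots> = T" using BiB Tc by simp
    finally have "T = Bi * M * B" by simp
    then have "similar_mat_wit T M Bi B"
      by (intro similar_mat_witI[OF BiB BBi] Tc Mc Bic Bc)
    then show ?thesis unfolding similar_mat_def by blast
  qed
  have lt: "lower_triangular M" unfolding lower_triangular_def M_def Mm_def by auto
  have diag: "\<forall>i \<le> Nw. M $$ (i,i) = 1 - real i * (real Nw + real Nb + 1 - real i) / (real N1 * real N2)"
    unfolding M_def Mm_def by auto
  show ?thesis
    using part1 part2 lt diag Mc unfolding n_def T_def by blast
qed

end
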